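(* Let $q$ be a power of $2$ and let $\alpha,\beta \in \mathbb{F}_{q^2}$ be such that the line $\{(\alpha t+\beta, t): t\}$ is not tangent to the Hermitian curve $x^q+x=y^{q+1}$. Let $\gamma = \beta + \beta^q$, $p(t) = t^{q+1} + \alpha^q t^q + \alpha t + \gamma$, let $\sigma_0,\dots,\sigma_q$ be the (distinct) roots of $p(t)$, and for $k \geq 0$ let $P_k = \sum_{i=0}^q \sigma_i^k$. Then for every integer $k \geq 0$, $P_{k+1} = \alpha^q P_k$ if and only if the remainder of $t^k$ upon division by $p(t)$ in $\mathbb{F}_{q^2}[t]$ has degree strictly less than $q$.
   Context: The roots $\sigma_i$ lie in an algebraic closure of $\mathbb{F}_{q^2}$ (in fact in $\mathbb{F}_{q^2}$, being the $t$-coordinates of the $q+1$ intersection points of the non-tangent line with the curve). *)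

theory Defs
  imports "HOL-Computational_Algebra.Polynomial" "HOL-Library.Cardinality"
begin

definition herm_curve :: "nat \<Rightarrow> 'a::field \<Rightarrow> 'a \<Rightarrow> bool" where
  "herm_curve q x y \<longleftrightarrow> x ^ q + x = y ^ (q + 1)"

text \<open>The line  {(alpha*t + beta, t)}  (direction vector (alpha, 1)) is tangent to the
  Hermitian curve  F(x,y) = x^q + x - y^(q+1) = 0  if it passes through a point of the curve
  at which the gradient of F is orthogonal to the direction of the line, i.e.
  alpha * dF/dx + 1 * dF/dy = 0 there.\<close>
definition line_tangent_herm :: "nat \<Rightarrow> 'a::field \<Rightarrow> 'a \<Rightarrow> bool" where
  "line_tangent_herm q \<alpha> \<beta> \<longleftrightarrow>
     (\<exists>t. herm_curve q (\<alpha> * t + \<beta>) t \<and>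
          \<alpha> * (of_nat q * (\<alpha> * t + \<beta>) ^ (q - 1) + 1) - of_nat (q + 1) * t ^ q = 0)"

definition herm_poly :: "nat \<Rightarrow> 'a::field \<Rightarrow> 'a \<Rightarrow> 'a poly" where
  "herm_poly q \<alpha> \<beta> =
     monom 1 (q + 1) + monom (\<alpha> ^ q) q + monom \<alpha> 1 + [:\<beta> + \<beta> ^ q:]"

definition power_sum :: "'a::field poly \<Rightarrow> nat \<Rightarrow> 'a" where
  "power_sum p k = (\<Sum>\<sigma>\<in>{\<sigma>. poly p \<sigma> = 0}. \<sigma> ^ k)"

end

theory Submission
  imports Defs
begin



lemma char2_frob:
  fixes a b :: "'a::field"
  assumes two: "(1::'a) + 1 = 0"
  shows "(a + b) ^ (2 ^ m) = a ^ (2 ^ m) + b ^ (2 ^ m)"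
proof (induction m)
  case 0 then show ?case by simp
next
  case (Suc m)
  have sq: "(x + y) ^ 2 = x ^ 2 + y ^ 2" for x y :: 'a
  proof -
    have "(x + y) ^ 2 = x ^ 2 + y ^ 2 + (1 + 1) * x * y" by (simp add: power2_sum)
    then show ?thesis using two by simp
  qed
  have "(a + b) ^ (2 ^ Suc m) = ((a + b) ^ (2 ^ m)) ^ 2" by (simp add: power_mult[symmetric] mult.commute)
  also have "\<dots> = (a ^ (2 ^ m)) ^ 2 + (b ^ (2 ^ m)) ^ 2" using Suc sq by simp
  also have "\<dots> = a ^ (2 ^ Suc m) + b ^ (2 ^ Suc m)" by (simp add: power_mult[symmetric] mult.commute)
  finally show ?case .
qed



lemma finite_field_pow_card:
  fixes x :: "'a::{field,finite}"
  shows "x ^ CARD('a) = x"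
proof (cases "x = 0")
  case True
  have "CARD('a) > 0" by simp
  then show ?thesis using True by (simp add: zero_power)
next
  case False
  define S where "S = UNIV - {0::'a}"
  have fin: "finite S" by simp
  have inj: "inj_on (\<lambda>y. x * y) S" using False by (auto simp: inj_on_def)
  have img: "(\<lambda>y. x * y) ` S = S"
  proof
    show "(\<lambda>y. x * y) ` S \<subseteq> S" using False by (auto simp: S_def)
    show "S \<subseteq> (\<lambda>y. x * y) ` S"
    proof
      fix z assume "z \<in> S"
      then have "z = x * (z / x)" "z / x \<in> S" using False by (auto simp: S_def)
      then show "z \<in> (\<lambda>y. x * y) ` S" by blast
    qed
  qed
  have "prod (\<lambda>y. y) S = prod (\<lambda>y. y) ((\<lambda>y. x * y) ` S)" using img by simp
  also have "\<dots> = prod (\<lambda>y. x * y) S"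
    using prod.reindex[OF inj, of "\<lambda>y. y"] by (simp add: comp_def)
  also have "\<dots> = prod (\<lambda>y. x) S * prod (\<lambda>y. y) S" by (rule prod.distrib)
  also have "\<dots> = x ^ card S * prod (\<lambda>y. y) S" by simp
  finally have e: "prod (\<lambda>y. y) S = x ^ card S * prod (\<lambda>y. y) S" .
  have "prod (\<lambda>y. y) S \<noteq> 0" by (simp add: S_def)
  with e have "x ^ card S = 1" by simp
  moreover have "CARD('a) = Suc (card S)"
  proof -
    have "card S = CARD('a) - 1" unfolding S_def by (simp add: card_Diff_singleton)
    moreover have "CARD('a) > 0" by simp
    ultimately show ?thesis by simp
  qed
  ultimately show ?thesis by simp
qed



lemma finite_field_card_zero:
  shows "(of_nat CARD('a) :: 'a::{field,finite}) = 0"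
proof -
  have inj: "inj (\<lambda>x::'a. x + 1)" by (auto simp: inj_on_def)
  have surj: "range (\<lambda>x::'a. x + 1) = UNIV"
    by (metis UNIV_I diff_add_cancel imageI subsetI subset_antisym)
  have "(\<Sum>x\<in>(UNIV::'a set). x) = (\<Sum>x\<in>UNIV. x + 1)"
    using sum.reindex[OF inj, of "\<lambda>x. x"] surj by simp
  also have "\<dots> = (\<Sum>x\<in>(UNIV::'a set). x) + of_nat CARD('a)"
    by (simp add: sum.distrib)
  finally show ?thesis by simp
qed




lemma char2_of_card:
  fixes q m :: nat
  assumes q: "q = 2 ^ m" and card: "CARD('a::{field,finite}) = q ^ 2"
  shows "(1::'a) + 1 = 0" "m \<ge> 1"
proof -
  have "(of_nat CARD('a) :: 'a) = 0" by (rule finite_field_card_zero)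
  then have "(2::'a) ^ (m * 2) = 0" using q card by (simp add: power_mult)
  then show "(1::'a) + 1 = 0" by simp
  show "m \<ge> 1"
  proof (rule ccontr)
    assume "\<not> m \<ge> 1"
    then have "CARD('a) = 1" using q card by simp
    moreover have "card {0::'a, 1} \<le> CARD('a)" by (rule card_mono) auto
    ultimately show False by simp
  qed
qed

lemma card_roots_le:
  fixes y :: "'a::field"
  assumes n0: "n > 0"
  shows "card {u. u ^ n = y} \<le> n"
proof -
  have False: "n \<noteq> 0" using n0 by simp
  define p where "p = monom (1::'a) n - [:y:]"
  have cn: "coeff p n = 1" using False by (simp add: p_def coeff_pCons split: nat.splits)
  have deg: "degree p = n"
  proof (rule antisym)
    show "degree p \<le> n" unfolding p_def
      by (rule degree_diff_le) (auto simp: degree_monom_le)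
    show "n \<le> degree p" using cn by (intro le_degree) simp
  qed
  have "p \<noteq> 0" using cn by auto
  moreover have "{u. u ^ n = y} = {u. poly p u = 0}" by (auto simp: p_def poly_monom)
  ultimately show ?thesis using card_poly_roots_bound[of p] deg by simp
qed

lemma norm_fibre_card:
  fixes c :: "'a::{field,finite}"
  assumes card: "CARD('a) = q ^ 2" and q2: "q \<ge> 2" and c0: "c \<noteq> 0" and cq: "c ^ q = c"
  shows "card {u. u ^ (q + 1) = c} = q + 1"
proof -
  define T where "T = {y::'a. y \<noteq> 0 \<and> y ^ q = y}"
  define F where "F y = {u::'a. u ^ (q + 1) = y}" for y
  have frob: "x ^ (q ^ 2) = x" for x :: 'a using finite_field_pow_card[of x] card by simp
  have Tsub: "T \<subseteq> {y. y ^ (q - 1) = 1}"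
  proof
    fix y assume "y \<in> T"
    then have "y \<noteq> 0" "y ^ (q - 1) * y = y * 1" using q2
      by (auto simp: T_def power_Suc2[symmetric] simp del: power_Suc2)
    then show "y \<in> {y. y ^ (q - 1) = 1}" by simp
  qed
  have cT: "card T \<le> q - 1"
    using card_mono[OF _ Tsub] card_roots_le[of "q - 1" "1::'a"] q2 by simp
  have Fle: "card (F y) \<le> q + 1" for y unfolding F_def by (rule card_roots_le) simp
  have cover: "UNIV - {0} = (\<Union>y\<in>T. F y)"
  proof (intro equalityI subsetI)
    fix u :: 'a assume "u \<in> UNIV - {0}"
    then have u0: "u \<noteq> 0" by simp
    have "(u ^ (q + 1)) ^ q = u ^ (q ^ 2) * u ^ q"
      by (simp add: power_mult[symmetric] power_add[symmetric] power2_eq_square algebra_simps)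
    also have "\<dots> = u ^ (q + 1)" using frob[of u] by (simp add: mult.commute)
    finally have "u ^ (q + 1) \<in> T" using u0 by (simp add: T_def)
    then show "u \<in> (\<Union>y\<in>T. F y)" by (auto simp: F_def)
  next
    fix u :: 'a assume "u \<in> (\<Union>y\<in>T. F y)"
    then obtain y where "y \<in> T" "u ^ (q + 1) = y" by (auto simp: F_def)
    then show "u \<in> UNIV - {0}" by (auto simp: T_def)
  qed
  have "card (UNIV - {0::'a}) = q ^ 2 - 1" using card by (simp add: card_Diff_singleton)
  also have "card (UNIV - {0::'a}) = (\<Sum>y\<in>T. card (F y))"
    unfolding cover by (rule card_UN_disjoint) (auto simp: F_def)
  finally have sumeq: "(\<Sum>y\<in>T. card (F y)) = q ^ 2 - 1" .
  have cT': "c \<in> T" using c0 cq by (simp add: T_def)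
  show ?thesis
  proof (rule ccontr)
    assume ne: "card {u. u ^ (q + 1) = c} \<noteq> q + 1"
    then have Fc: "card (F c) \<le> q" using Fle[of c] by (simp add: F_def)
    have "(\<Sum>y\<in>T. card (F y)) = card (F c) + (\<Sum>y\<in>T - {c}. card (F y))"
      using cT' by (simp add: sum.remove)
    also have "(\<Sum>y\<in>T - {c}. card (F y)) \<le> (\<Sum>y\<in>T - {c}. q + 1)"
      by (rule sum_mono) (rule Fle)
    also have "\<dots> = (card T - 1) * (q + 1)" using cT' by (simp add: card_Diff_singleton)
    also have "\<dots> \<le> (q - 2) * (q + 1)" using cT by (intro mult_le_mono1) simp
    finally have "q ^ 2 - 1 \<le> q + (q - 2) * (q + 1)" using sumeq Fc by linarith
    moreover obtain r where "q = r + 2" using q2 by (metis add.commute le_Suc_ex)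
    ultimately show False by (simp add: power2_eq_square algebra_simps)
  qed
qed

lemma norm_fibre_power_sum:
  fixes c :: "'a::{field,finite}"
  assumes card: "CARD('a) = q ^ 2" and q2: "q \<ge> 2" and c0: "c \<noteq> 0" and cq: "c ^ q = c"
    and j: "1 \<le> j" "j \<le> q"
  shows "(\<Sum>u\<in>{u. u ^ (q + 1) = c}. u ^ j) = 0"
proof -
  define U where "U = {u::'a. u ^ (q + 1) = c}"
  have mu: "card {z::'a. z ^ (q + 1) = 1} = q + 1"
    using norm_fibre_card[OF card q2, of 1] by simp
  have "\<exists>z::'a. z ^ (q + 1) = 1 \<and> z ^ j \<noteq> 1"
  proof (rule ccontr)
    assume nz: "\<not> ?thesis"
    have "{z::'a. z ^ (q + 1) = 1} \<subseteq> {z. z ^ j = 1}"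
    proof
      fix z :: 'a assume "z \<in> {z::'a. z ^ (q + 1) = 1}"
      then have "z ^ (q + 1) = 1" by simp
      then show "z \<in> {z. z ^ j = 1}" using nz by blast
    qed
    then have "card {z::'a. z ^ (q + 1) = 1} \<le> card {z::'a. z ^ j = 1}" by (intro card_mono) auto
    also have "\<dots> \<le> j" by (rule card_roots_le) (use j in simp)
    finally show False using mu j by simp
  qed
  then obtain z :: 'a where z1: "z ^ (q + 1) = 1" and zj: "z ^ j \<noteq> 1" by blast
  have z0: "z \<noteq> 0" using z1 by auto
  have inj: "inj_on (\<lambda>u. z * u) U" using z0 by (auto simp: inj_on_def)
  have img: "(\<lambda>u. z * u) ` U = U"
  proof (intro equalityI subsetI)
    fix v assume "v \<in> (\<lambda>u. z * u) ` U"
    then show "v \<in> U" using z1 by (auto simp: U_def power_mult_distrib)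
  next
    fix v assume v: "v \<in> U"
    have "(v / z) ^ (q + 1) = c" using v z1 by (simp add: U_def power_divide)
    then have "v / z \<in> U" by (simp add: U_def)
    moreover have "v = z * (v / z)" using z0 by simp
    ultimately show "v \<in> (\<lambda>u. z * u) ` U" by blast
  qed
  have "(\<Sum>u\<in>U. u ^ j) = (\<Sum>u\<in>(\<lambda>u. z * u) ` U. u ^ j)" using img by simp
  also have "\<dots> = (\<Sum>u\<in>U. (z * u) ^ j)" using sum.reindex[OF inj, of "\<lambda>u. u ^ j"] by (simp add: comp_def)
  also have "\<dots> = z ^ j * (\<Sum>u\<in>U. u ^ j)" by (simp add: power_mult_distrib sum_distrib_left)
  finally have "(1 - z ^ j) * (\<Sum>u\<in>U. u ^ j) = 0" by (simp add: algebra_simps)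
  then show ?thesis using zj by (simp add: U_def)
qed




lemma poly_upto:
  fixes g :: "'a::comm_semiring_1 poly"
  assumes "degree g \<le> q"
  shows "poly g u = (\<Sum>i\<le>q. coeff g i * u ^ i)"
proof -
  have "poly g u = (\<Sum>i\<le>degree g. coeff g i * u ^ i)" by (rule poly_altdef)
  also have "\<dots> = (\<Sum>i\<le>q. coeff g i * u ^ i)"
    by (rule sum.mono_neutral_left) (use assms in \<open>auto simp: coeff_eq_0\<close>)
  finally show ?thesis .
qed

lemma sum_poly_vanish:
  fixes U :: "'a::field set"
  assumes fin: "finite U" and ps: "\<And>j. 1 \<le> j \<Longrightarrow> j \<le> q \<Longrightarrow> (\<Sum>u\<in>U. u ^ j) = 0"
    and deg: "degree g \<le> q" and c0: "coeff g 0 = 0"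
  shows "(\<Sum>u\<in>U. poly g u) = 0"
proof -
  have "(\<Sum>u\<in>U. poly g u) = (\<Sum>u\<in>U. \<Sum>i\<le>q. coeff g i * u ^ i)"
    using poly_upto[OF deg] by simp
  also have "\<dots> = (\<Sum>i\<le>q. \<Sum>u\<in>U. coeff g i * u ^ i)" by (rule sum.swap)
  also have "\<dots> = (\<Sum>i\<le>q. coeff g i * (\<Sum>u\<in>U. u ^ i))" by (simp add: sum_distrib_left)
  also have "\<dots> = 0"
  proof (rule sum.neutral, rule ballI)
    fix i assume "i \<in> {..q}"
    then show "coeff g i * (\<Sum>u\<in>U. u ^ i) = 0" using c0 ps[of i] by (cases "i = 0") auto
  qed
  finally show ?thesis .
qed




theorem mainTheorem4:
  fixes q m :: nat and \<alpha> \<beta> :: "'a::{field,finite}"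
  assumes "q = 2 ^ m"
    and "CARD('a) = q ^ 2"
    and "\<not> line_tangent_herm q \<alpha> \<beta>"
  shows "\<forall>k::nat. power_sum (herm_poly q \<alpha> \<beta>) (k + 1) = \<alpha> ^ q * power_sum (herm_poly q \<alpha> \<beta>) k
           \<longleftrightarrow> degree ([:0, 1:] ^ k mod herm_poly q \<alpha> \<beta>) < q"
proof -
  note qdef = assms(1) and card = assms(2) and nt = assms(3)
  have two: "(1::'a) + 1 = 0" and m1: "m \<ge> 1" using char2_of_card[OF qdef card] by auto
  have q2: "q \<ge> 2"
  proof -
    have "2 ^ 1 \<le> (2::nat) ^ m" using m1 by (intro power_increasing) auto
    then show ?thesis using qdef by simp
  qed
  have dbl: "x + x = 0" for x :: 'a
  proof -
    have "x + x = (1 + 1) * x" by (simp add: algebra_simps)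
    then show ?thesis using two by simp
  qed
  have neg: "- x = x" for x :: 'a using dbl[of x] by (simp add: add_eq_0_iff)
  have frob: "(x + y) ^ q = x ^ q + y ^ q" for x y :: 'a
    using char2_frob[OF two] qdef by simp
  have fpow: "x ^ (q ^ 2) = x" for x :: 'a using finite_field_pow_card[of x] card by simp
  have fpow2: "(x ^ q) ^ q = x" for x :: 'a using fpow[of x] by (simp add: power_mult[symmetric] power2_eq_square)
  have ofq: "(of_nat q :: 'a) = 0"
  proof -
    have "(of_nat q :: 'a) = 2 ^ m" using qdef by simp
    also have "\<dots> = 0" using two m1 by simp
    finally show ?thesis .
  qed
  have ofq1: "(of_nat (q + 1) :: 'a) = 1" using ofq by simp
  define a where "a = \<alpha> ^ q"
  define c where "c = \<alpha> ^ (q + 1) + \<beta> + \<beta> ^ q"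
  define p where "p = herm_poly q \<alpha> \<beta>"
  have aq: "a ^ q = \<alpha>" unfolding a_def by (rule fpow2)
  have polyp: "poly p x = x ^ (q + 1) + \<alpha> ^ q * x ^ q + \<alpha> * x + (\<beta> + \<beta> ^ q)" for x
    by (simp add: p_def herm_poly_def poly_monom)
  have shift: "poly p (u + a) = u ^ (q + 1) + c" for u
  proof -
    have e1: "(u + a) ^ (q + 1) = (u ^ q + \<alpha>) * (u + a)"
      using frob[of u a] aq by simp
    have "poly p (u + a) = (u ^ q + \<alpha>) * (u + a) + a * (u ^ q + \<alpha>) + \<alpha> * (u + a) + (\<beta> + \<beta> ^ q)"
      using polyp[of "u + a"] e1 frob[of u a] aq by (simp add: a_def)
    also have "\<dots> = u ^ (q + 1) + c + (1 + 1) * (a * u ^ q + \<alpha> * u + \<alpha> * a)"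
      by (simp add: c_def a_def algebra_simps)
    finally show ?thesis using two by simp
  qed
  have cq: "c ^ q = c"
  proof -
    have "c ^ q = (\<alpha> ^ (q + 1)) ^ q + \<beta> ^ q + (\<beta> ^ q) ^ q" unfolding c_def by (simp add: frob)
    also have "(\<alpha> ^ (q + 1)) ^ q = (\<alpha> ^ q) ^ q * \<alpha> ^ q"
      by (simp add: power_mult_distrib power_mult)
    finally show ?thesis using fpow2 by (simp add: c_def algebra_simps)
  qed
  have c0: "c \<noteq> 0"
  proof
    assume cz: "c = 0"
    have "line_tangent_herm q \<alpha> \<beta>"
      unfolding line_tangent_herm_def
    proof (intro exI conjI)
      have hc: "(\<alpha> * a + \<beta>) ^ q + (\<alpha> * a + \<beta>) = a ^ (q + 1) + c"
      proof -
        have x1: "(\<alpha> * a + \<beta>) ^ q = \<alpha> ^ q * \<alpha> + \<beta> ^ q"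
          using frob[of "\<alpha> * a" \<beta>] aq by (simp only: power_mult_distrib)
        have x2: "a ^ (q + 1) = \<alpha> * \<alpha> ^ q" using aq by (simp add: a_def)
        have x3: "\<alpha> ^ (q + 1) = \<alpha> * \<alpha> ^ q" by simp
        have "(\<alpha> * a + \<beta>) ^ q + (\<alpha> * a + \<beta>) = (1 + 1) * (\<alpha> * \<alpha> ^ q) + \<beta> + \<beta> ^ q"
          unfolding x1 by (simp add: a_def algebra_simps)
        moreover have "a ^ (q + 1) + c = (1 + 1) * (\<alpha> * \<alpha> ^ q) + \<beta> + \<beta> ^ q"
          unfolding x2 c_def x3 by (simp add: algebra_simps)
        ultimately show ?thesis by simp
      qed
      show "herm_curve q (\<alpha> * a + \<beta>) a" unfolding herm_curve_def using hc cz by simp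
      show "\<alpha> * (of_nat q * (\<alpha> * a + \<beta>) ^ (q - 1) + 1) - of_nat (q + 1) * a ^ q = 0"
        using ofq ofq1 aq by simp
    qed
    with nt show False by simp
  qed
  define U where "U = {u::'a. u ^ (q + 1) = c}"
  have cardU: "card U = q + 1" unfolding U_def by (rule norm_fibre_card[OF card q2 c0 cq])
  have psU: "(\<Sum>u\<in>U. u ^ j) = 0" if "1 \<le> j" "j \<le> q" for j
    unfolding U_def by (rule norm_fibre_power_sum[OF card q2 c0 cq that])
  have R: "{\<sigma>. poly p \<sigma> = 0} = (\<lambda>u. u + a) ` U"
  proof (intro equalityI subsetI)
    fix s assume "s \<in> {\<sigma>. poly p \<sigma> = 0}"
    then have "poly p ((s - a) + a) = 0" by simp
    then have "(s - a) ^ (q + 1) = c" using shift[of "s - a"] neg by (simp add: add_eq_0_iff)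
    then show "s \<in> (\<lambda>u. u + a) ` U" unfolding U_def by (intro image_eqI[of _ _ "s - a"]) auto
  next
    fix s assume "s \<in> (\<lambda>u. u + a) ` U"
    then obtain u where "u \<in> U" "s = u + a" by blast
    then show "s \<in> {\<sigma>. poly p \<sigma> = 0}" using shift[of u] dbl by (simp add: U_def)
  qed
  have ps: "power_sum p k = (\<Sum>u\<in>U. (u + a) ^ k)" for k
  proof -
    have inj: "inj_on (\<lambda>u. u + a) U" by (auto simp: inj_on_def)
    show ?thesis unfolding power_sum_def R using sum.reindex[OF inj, of "\<lambda>s. s ^ k"] by (simp add: comp_def)
  qed
  have coeffp: "coeff p n = (if n = q + 1 then 1 else 0) + (if n = q then \<alpha> ^ q else 0)
      + (if n = 1 then \<alpha> else 0) + (if n = 0 then \<beta> + \<beta> ^ q else 0)" for n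
    by (simp add: p_def herm_poly_def coeff_monom coeff_pCons split: nat.splits)
  have degp: "degree p = q + 1"
  proof (rule antisym)
    show "degree p \<le> q + 1" by (rule degree_le) (use q2 in \<open>auto simp: coeffp\<close>)
    show "q + 1 \<le> degree p" by (rule le_degree) (use q2 in \<open>simp add: coeffp\<close>)
  qed
  have p0: "p \<noteq> 0" using degp by auto
  show ?thesis
  proof (intro allI)
    fix k :: nat
    define r where "r = [:0, 1:] ^ k mod p"
    have degr: "degree r \<le> q"
      using degree_mod_less[OF p0, of "[:0, 1:] ^ k"] degp by (auto simp: r_def)
    have polyr: "poly r (u + a) = (u + a) ^ k" if "u \<in> U" for u
    proof -
      have "[:0, 1:] ^ k = ([:0, 1:] ^ k div p) * p + r" by (simp add: r_def)
      then have "poly ([:0, 1:] ^ k) (u + a) = poly (([:0, 1:] ^ k div p) * p + r) (u + a)" by simp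
      moreover have "poly p (u + a) = 0" using shift[of u] that dbl by (simp add: U_def)
      ultimately show ?thesis by (simp add: poly_power)
    qed
    define r' where "r' = r - smult (coeff r q) (monom 1 q)"
    have cr': "coeff r' q = 0" by (simp add: r'_def coeff_monom)
    have degr': "degree r' \<le> q - 1"
    proof (cases "r' = 0")
      case True then show ?thesis by simp
    next
      case False
      have "degree r' \<le> q" unfolding r'_def using degr
        by (intro degree_diff_le) (auto intro: order.trans[OF degree_smult_le] simp: degree_monom_le)
      moreover have "degree r' \<noteq> q" using False cr' by (metis leading_coeff_0_iff)
      ultimately show ?thesis by simp
    qed
    define g where "g = pcompose r' [:a, 1:] * [:0, 1:]"
    have degg: "degree g \<le> q"
    proof -
      have "degree g \<le> degree (pcompose r' [:a, 1:]) + degree [:0, 1::'a:]"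
        unfolding g_def by (rule degree_mult_le)
      also have "\<dots> = degree r' + 1" by (simp add: degree_pcompose)
      finally show ?thesis using degr' q2 by simp
    qed
    have cg: "coeff g 0 = 0" by (simp add: g_def poly_0_coeff_0[symmetric])
    have sg: "(\<Sum>u\<in>U. poly g u) = 0"
      by (rule sum_poly_vanish[OF _ psU degg cg]) auto
    have polyg: "poly g u = poly r' (u + a) * u" for u
      by (simp add: g_def poly_pcompose add.commute)
    have key: "(\<Sum>u\<in>U. (u + a) ^ q * u) = c"
    proof -
      have "(\<Sum>u\<in>U. (u + a) ^ q * u) = (\<Sum>u\<in>U. u ^ (q + 1) + \<alpha> * u ^ 1)"
        using frob aq by (intro sum.cong) (auto simp: algebra_simps)
      also have "\<dots> = (\<Sum>u\<in>U. c) + \<alpha> * (\<Sum>u\<in>U. u ^ 1)"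
        by (simp add: sum.distrib sum_distrib_left U_def)
      also have "\<dots> = of_nat (q + 1) * c" using psU[of 1] q2 cardU by simp
      finally show ?thesis using ofq1 by simp
    qed
    have D: "power_sum p (k + 1) - \<alpha> ^ q * power_sum p k = coeff r q * c"
    proof -
      have "power_sum p (k + 1) - \<alpha> ^ q * power_sum p k = (\<Sum>u\<in>U. (u + a) ^ k * u)"
        unfolding ps a_def by (simp add: sum_distrib_left sum_subtractf[symmetric] algebra_simps)
      also have "\<dots> = (\<Sum>u\<in>U. poly r (u + a) * u)" using polyr by simp
      also have "\<dots> = (\<Sum>u\<in>U. coeff r q * ((u + a) ^ q * u) + poly g u)"
        by (intro sum.cong) (auto simp: polyg r'_def poly_monom algebra_simps)
      also have "\<dots> = coeff r q * c" using key sg by (simp add: sum.distrib sum_distrib_left[symmetric])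
      finally show ?thesis .
    qed
    have "power_sum p (k + 1) = \<alpha> ^ q * power_sum p k \<longleftrightarrow> coeff r q = 0"
      using D c0 by (metis mult_eq_0_iff right_minus_eq)
    also have "\<dots> \<longleftrightarrow> degree r < q"
    proof
      assume z: "coeff r q = 0"
      show "degree r < q"
      proof (cases "r = 0")
        case True then show ?thesis using q2 by simp
      next
        case False
        then have "degree r \<noteq> q" using z by (metis leading_coeff_0_iff)
        then show ?thesis using degr by simp
      qed
    next
      assume "degree r < q" then show "coeff r q = 0" by (simp add: coeff_eq_0)
    qed
    finally show "power_sum (herm_poly q \<alpha> \<beta>) (k + 1) = \<alpha> ^ q * power_sum (herm_poly q \<alpha> \<beta>) k
           \<longleftrightarrow> degree ([:0, 1:] ^ k mod herm_poly q \<alpha> \<beta>) < q" by (simp add: p_def r_def)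
  qed
qed


end
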